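(* Let $B$ be a Boolean algebra, $d\ge 1$ an integer, and let $a_0,\dots,a_{d+1},b_1,\dots,b_{d+1}\in B$ satisfy $a_0=1$, $a_1\ge a_2\ge\dots\ge a_{d+1}=0$, $b_1\ge b_2\ge\dots\ge b_{d+1}=0$, and $a_i\le b_i$ for all $i$. Then the system in the unknowns $x_1,\dots,x_d\in B$ $$x_1\ge x_2\ge\dots\ge x_d,\qquad \bigvee_{i=0}^{n}(a_{n-i}\wedge x_i)=b_n\quad(n=1,\dots,d+1),$$ where $x_0=1$ and $x_{d+1}=0$ are constants, has at most one solution $(x_1,\dots,x_d)\in B^d$.
   Context: $\ge$ is the lattice order of the Boolean algebra $B$. *)

theory Defs
  imports Main
begin

definition is_solution :: "nat \<Rightarrow> (nat \<Rightarrow> 'a::boolean_algebra) \<Rightarrow> (nat \<Rightarrow> 'a) \<Rightarrow> (nat \<Rightarrow> 'a) \<Rightarrow> bool" where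
  "is_solution d a b x \<longleftrightarrow>
     x 0 = top \<and> x (Suc d) = bot \<and>
     (\<forall>i. 1 \<le> i \<and> i < d \<longrightarrow> x (Suc i) \<le> x i) \<and>
     (\<forall>n. 1 \<le> n \<and> n \<le> Suc d \<longrightarrow>
        Sup_fin ((\<lambda>i. inf (a (n - i)) (x i)) ` {0..n}) = b n)"

end

theory Submission
  imports Defs
begin

lemma bot_of_sup_fin:
  fixes w :: "'a::boolean_algebra"
  assumes "finite S" "S \<noteq> {}" "w \<le> Sup_fin S" "\<And>s. s \<in> S \<Longrightarrow> inf w s = bot"
  shows "w = bot"
proof -
  have "Sup_fin S \<le> - w"
    using assms(1,2) proof (rule Sup_fin.boundedI)
    fix s assume "s \<in> S"
    then have "inf s w = bot" using assms(4) by (simp add: inf_commute)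
    then show "s \<le> - w" using inf_shunt[of s w] by simp
  qed
  with assms(3) have "w \<le> - w" by order
  then show ?thesis by (metis inf.absorb1 inf_compl_bot)
qed

lemma mono_seg:
  fixes f :: "nat \<Rightarrow> 'a::order"
  assumes "\<forall>i. lo \<le> i \<and> i < hi \<longrightarrow> f (Suc i) \<le> f i"
  shows "lo \<le> i \<Longrightarrow> i \<le> j \<Longrightarrow> j \<le> hi \<Longrightarrow> f j \<le> f i"
proof (induction j)
  case 0
  then show ?case by simp
next
  case (Suc j)
  show ?case
  proof (cases "i = Suc j")
    case True then show ?thesis by simp
  next
    case False
    then have "i \<le> j" using Suc by simp
    then have "f j \<le> f i" using Suc by simp
    moreover have "f (Suc j) \<le> f j" using assms Suc \<open>i \<le> j\<close> by simp
    ultimately show ?thesis by order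
  qed
qed

lemma key:
  fixes a b x y :: "nat \<Rightarrow> 'a::boolean_algebra"
  assumes monx: "\<And>i j. i \<le> j \<Longrightarrow> j \<le> Suc d \<Longrightarrow> x j \<le> x i"
    and mony: "\<And>i j. i \<le> j \<Longrightarrow> j \<le> Suc d \<Longrightarrow> y j \<le> y i"
    and amon: "\<And>i j. 1 \<le> i \<Longrightarrow> i \<le> j \<Longrightarrow> j \<le> Suc d \<Longrightarrow> a j \<le> a i"
    and a0: "a 0 = top" and ad: "a (Suc d) = bot" and bd: "b (Suc d) = bot"
    and ex: "\<And>n. 1 \<le> n \<Longrightarrow> n \<le> Suc d \<Longrightarrow> Sup_fin ((\<lambda>i. inf (a (n - i)) (x i)) ` {0..n}) = b n"
    and ey: "\<And>n. 1 \<le> n \<Longrightarrow> n \<le> Suc d \<Longrightarrow> Sup_fin ((\<lambda>i. inf (a (n - i)) (y i)) ` {0..n}) = b n"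
    and k: "1 \<le> k" "k \<le> d"
  shows "x k \<le> y k"
proof -
  define z where "z = inf (x k) (- y k)"
  have cob: "inf (a (n - i)) (x i) \<le> b n" if "1 \<le> n" "n \<le> Suc d" "i \<le> n" for n i
  proof -
    have "inf (a (n - i)) (x i) \<le> Sup_fin ((\<lambda>i. inf (a (n - i)) (x i)) ` {0..n})"
      by (rule Sup_fin.coboundedI) (use that in auto)
    then show ?thesis using ex[OF that(1,2)] by simp
  qed
  have step: "inf z (a j) = bot" if "j \<le> Suc d" for j
    using that
  proof (induction j rule: inc_induct)
    case base
    then show ?case by (simp add: ad)
  next
    case (step j)
    define w where "w = inf z (a j)"
    have wz: "w \<le> z" and wa: "w \<le> a j" unfolding w_def by auto
    have wx: "w \<le> inf (a j) (x k)" using wz wa unfolding z_def by auto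
    show ?case
    proof (cases "k + j \<le> Suc d")
      case True
      define n where "n = k + j"
      have n1: "1 \<le> n" "n \<le> Suc d" using k True n_def by auto
      have "inf (a j) (x k) \<le> b n" using cob[OF n1, of k] n_def by simp
      then have "w \<le> b n" using order_trans[OF wx] by blast
      then have wle: "w \<le> Sup_fin ((\<lambda>i. inf (a (n - i)) (y i)) ` {0..n})"
        using ey[OF n1] by simp
      have "w = bot"
      proof (rule bot_of_sup_fin[OF _ _ wle])
        fix s assume "s \<in> (\<lambda>i. inf (a (n - i)) (y i)) ` {0..n}"
        then obtain i where i: "i \<le> n" "s = inf (a (n - i)) (y i)" by auto
        show "inf w s = bot"
        proof (cases "k \<le> i")
          case True
          have yik: "y i \<le> y k" using mony True i n1 by simp
          have "w \<le> - y k" using wz unfolding z_def by auto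
          moreover from yik have "- y k \<le> - y i" by simp
          ultimately have "w \<le> - y i" by (rule order_trans)
          then have "inf w (y i) = bot" using inf_shunt[of w "y i"] by simp
          moreover have "inf w s \<le> inf w (y i)" using i by (simp add: le_infI2)
          ultimately show ?thesis using bot_unique by metis
        next
          case False
          have "a (n - i) \<le> a (Suc j)" using amon[of "Suc j" "n - i"] False i n1 n_def by simp
          then have "inf w s \<le> inf z (a (Suc j))" using i wz by (simp add: le_infI1 le_infI2)
          then show ?thesis using step.IH bot_unique by metis
        qed
      qed auto
      then show ?thesis unfolding w_def .
    next
      case False
      define i0 where "i0 = Suc d - j"
      have "i0 \<le> k" using False i0_def by simp
      have "x k \<le> x i0" using monx \<open>i0 \<le> k\<close> k by simp
      moreover have "Suc d - i0 = j" using step i0_def by simp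
      ultimately have "inf (a j) (x k) \<le> inf (a (Suc d - i0)) (x i0)"
        using inf_mono by auto
      also have "\<dots> \<le> b (Suc d)" by (rule cob) (auto simp: i0_def)
      finally have "inf (a j) (x k) \<le> bot" using bd by simp
      then show ?thesis using wx unfolding w_def by (meson bot_unique order_trans)
    qed
  qed
  have "z = bot" using step[of 0] a0 by simp
  then show ?thesis unfolding z_def by (simp add: inf_shunt)
qed

theorem mainTheorem9:
  fixes d :: nat and a b x y :: "nat \<Rightarrow> 'a::boolean_algebra"
  assumes "d \<ge> 1"
    and "a 0 = top"
    and "\<forall>i. 1 \<le> i \<and> i \<le> d \<longrightarrow> a (Suc i) \<le> a i"
    and "a (Suc d) = bot"
    and "\<forall>i. 1 \<le> i \<and> i \<le> d \<longrightarrow> b (Suc i) \<le> b i"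
    and "b (Suc d) = bot"
    and "\<forall>i. 1 \<le> i \<and> i \<le> Suc d \<longrightarrow> a i \<le> b i"
    and "is_solution d a b x"
    and "is_solution d a b y"
  shows "\<forall>i. 1 \<le> i \<and> i \<le> d \<longrightarrow> x i = y i"
proof -
  have amon: "\<And>i j. 1 \<le> i \<Longrightarrow> i \<le> j \<Longrightarrow> j \<le> Suc d \<Longrightarrow> a j \<le> a i"
    by (rule mono_seg[where lo=1 and hi="Suc d"]) (use assms(3) in auto)
  have monsol: "\<And>i j. i \<le> j \<Longrightarrow> j \<le> Suc d \<Longrightarrow> u j \<le> u i" if "is_solution d a b u" for u
  proof -
    fix i j :: nat assume ij: "i \<le> j" "j \<le> Suc d"
    have u0: "u 0 = top" and ud: "u (Suc d) = bot"
      and um: "\<forall>i. 1 \<le> i \<and> i < d \<longrightarrow> u (Suc i) \<le> u i"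
      using that unfolding is_solution_def by auto
    show "u j \<le> u i"
    proof (cases "j = Suc d")
      case True then show ?thesis by (simp add: ud)
    next
      case False
      show ?thesis
      proof (cases "i = 0")
        case True then show ?thesis by (simp add: u0)
      next
        case False
        then show ?thesis using mono_seg[OF um, of i j] ij \<open>j \<noteq> Suc d\<close> by simp
      qed
    qed
  qed
  have eq: "\<And>n. 1 \<le> n \<Longrightarrow> n \<le> Suc d \<Longrightarrow> Sup_fin ((\<lambda>i. inf (a (n - i)) (u i)) ` {0..n}) = b n"
    if "is_solution d a b u" for u using that unfolding is_solution_def by auto
  show ?thesis
  proof (intro allI impI)
    fix i assume i: "1 \<le> i \<and> i \<le> d"
    have "x i \<le> y i"
      by (rule key[OF monsol[OF assms(8)] monsol[OF assms(9)] amon assms(2,4,6)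
            eq[OF assms(8)] eq[OF assms(9)]]) (use i in auto)
    moreover have "y i \<le> x i"
      by (rule key[OF monsol[OF assms(9)] monsol[OF assms(8)] amon assms(2,4,6)
            eq[OF assms(9)] eq[OF assms(8)]]) (use i in auto)
    ultimately show "x i = y i" by simp
  qed
qed

end
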